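(* Let $\mathbb{X}$ be a real or complex Banach algebra with identity, let $k\ge1$ be an integer, let $a_0,\dots,a_k,b_0,\dots,b_k\in\mathbb{X}$ with $a_k\ne0$ or $b_k\ne0$, and let $g_n:\mathbb{X}\to\mathbb{X}$, $n\ge0$, be functions such that for some real $\sigma>0$, $$|g_n(\xi)|\le\sigma|\xi|\quad\text{for all }\xi\in\mathbb{X}\text{ and all }n.$$ Assume $$\alpha:=\sum_{i=0}^{k}\big(|a_i|+\sigma|b_i|\big)<1.$$ Then every solution $\{x_n\}$ of $$x_{n+1}=\sum_{i=0}^{k}a_ix_{n-i}+g_n\Big(\sum_{i=0}^{k}b_ix_{n-i}\Big),\quad n=0,1,2,\dots$$ with initial values $x_0,x_{-1},\dots,x_{-k}\in\mathbb{X}$ satisfies, for all $n\ge1$, $$|x_n|\le\alpha^{n/(k+1)}\max\{|x_0|,|x_{-1}|,\dots,|x_{-k}|\}.$$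
   Context: A Banach algebra with identity is a Banach space $\mathbb{X}$ (norm $|\cdot|$) with an associative, bilinear multiplication satisfying $|xy|\le|x||y|$ and having an identity $1$ with $|1|=1$; scalar multiplication satisfies $\alpha(xy)=(\alpha x)y=x(\alpha y)$. A solution of the difference equation is the sequence generated by iteration from the $k+1$ initial values. *)

theory Defs
  imports "HOL-Analysis.Analysis"
begin

end

theory Submission
  imports Defs
begin

theorem lemma2:
  fixes a b :: "nat \<Rightarrow> 'a :: {real_normed_algebra_1, banach}"
    and g :: "nat \<Rightarrow> 'a \<Rightarrow> 'a"
    and x :: "int \<Rightarrow> 'a"
    and k :: nat and \<sigma> :: real
  assumes k: "k \<ge> 1"
    and nz: "a k \<noteq> 0 \<or> b k \<noteq> 0"
    and sigma_pos: "\<sigma> > 0"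
    and g_bound: "\<And>n \<xi>. norm (g n \<xi>) \<le> \<sigma> * norm \<xi>"
    and alpha_lt: "(\<Sum>i\<le>k. norm (a i) + \<sigma> * norm (b i)) < 1"
    and rec: "\<And>n::nat. x (int n + 1) =
       (\<Sum>i\<le>k. a i * x (int n - int i)) + g n (\<Sum>i\<le>k. b i * x (int n - int i))"
  shows "\<forall>n::nat. n \<ge> 1 \<longrightarrow>
     norm (x (int n)) \<le> (\<Sum>i\<le>k. norm (a i) + \<sigma> * norm (b i)) powr (real n / real (k + 1))
        * Max ((\<lambda>j::nat. norm (x (- int j))) ` {..k})"
proof -
  define \<alpha> where "\<alpha> = (\<Sum>i\<le>k. norm (a i) + \<sigma> * norm (b i))"
  define M where "M = Max ((\<lambda>j::nat. norm (x (- int j))) ` {..k})"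
  define B where "B m = \<alpha> powr (real_of_int (max m 0) / real (k+1)) * M" for m :: int
  have apos: "\<alpha> > 0"
  proof -
    have "norm (a k) + \<sigma> * norm (b k) > 0" using nz sigma_pos
      by (metis add_nonneg_pos add_pos_nonneg mult_nonneg_nonneg mult_pos_pos norm_ge_zero
          order_less_imp_le zero_less_norm_iff)
    moreover have "norm (a k) + \<sigma> * norm (b k) \<le> \<alpha>" unfolding \<alpha>_def
      by (rule member_le_sum) (use sigma_pos in auto)
    ultimately show ?thesis by linarith
  qed
  have a1: "\<alpha> < 1" using alpha_lt \<alpha>_def by simp
  have Mnn: "M \<ge> 0"
  proof -
    have "norm (x (- int 0)) \<le> M" unfolding M_def by (rule Max_ge) (auto intro!: image_eqI[where x=0])
    then show ?thesis using norm_ge_zero order_trans by blast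
  qed
  have Bmono: "B m' \<le> B m" if "m \<le> m'" for m m'
    unfolding B_def
    by (rule mult_right_mono[OF powr_mono']) (use that apos a1 Mnn in \<open>auto simp: divide_right_mono\<close>)
  have main: "\<forall>m. - int k \<le> m \<and> m \<le> int n \<longrightarrow> norm (x m) \<le> B m" for n
  proof (induction n)
    case 0
    show ?case
    proof (intro allI impI)
      fix m assume m: "- int k \<le> m \<and> m \<le> int 0"
      have "B m = M" using m apos by (simp add: B_def)
      moreover have "norm (x m) \<le> M" unfolding M_def
        using m by (intro Max_ge) (auto intro!: image_eqI[where x="nat (-m)"])
      ultimately show "norm (x m) \<le> B m" by simp
    qed
  next
    case (Suc n)
    have IH: "norm (x (int n - int i)) \<le> B (int n - int k)" if "i \<le> k" for i
    proof -
      have "norm (x (int n - int i)) \<le> B (int n - int i)" using Suc.IH that by simp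
      also have "\<dots> \<le> B (int n - int k)" by (rule Bmono) (use that in simp)
      finally show ?thesis .
    qed
    have "norm (x (int n + 1)) \<le> norm (\<Sum>i\<le>k. a i * x (int n - int i))
        + norm (g n (\<Sum>i\<le>k. b i * x (int n - int i)))"
      unfolding rec by (rule norm_triangle_ineq)
    also have "\<dots> \<le> (\<Sum>i\<le>k. norm (a i) * B (int n - int k))
        + \<sigma> * (\<Sum>i\<le>k. norm (b i) * B (int n - int k))"
    proof (rule add_mono)
      show "norm (\<Sum>i\<le>k. a i * x (int n - int i)) \<le> (\<Sum>i\<le>k. norm (a i) * B (int n - int k))"
        by (rule order_trans[OF norm_sum sum_mono], rule order_trans[OF norm_mult_ineq])
           (simp add: IH mult_left_mono)
      have "norm (\<Sum>i\<le>k. b i * x (int n - int i)) \<le> (\<Sum>i\<le>k. norm (b i) * B (int n - int k))"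
        by (rule order_trans[OF norm_sum sum_mono], rule order_trans[OF norm_mult_ineq])
           (simp add: IH mult_left_mono)
      then show "norm (g n (\<Sum>i\<le>k. b i * x (int n - int i))) \<le> \<sigma> * (\<Sum>i\<le>k. norm (b i) * B (int n - int k))"
        using g_bound sigma_pos by (meson mult_left_mono order_trans less_imp_le)
    qed
    also have "\<dots> = \<alpha> * B (int n - int k)"
      unfolding \<alpha>_def by (simp add: sum_distrib_left sum_distrib_right sum.distrib algebra_simps)
    also have "\<dots> \<le> B (int n + 1)"
    proof -
      have "\<alpha> * B (int n - int k) = \<alpha> powr (1 + real_of_int (max (int n - int k) 0) / real (k+1)) * M"
        unfolding B_def using apos by (simp add: powr_add)
      also have "\<dots> \<le> B (int n + 1)" unfolding B_def
      proof (rule mult_right_mono[OF powr_mono'])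
        have ineq: "real_of_int (max (int n + 1) 0) \<le> real (k+1) + real_of_int (max (int n - int k) 0)"
          by simp
        then show "real_of_int (max (int n + 1) 0) / real (k + 1)
            \<le> 1 + real_of_int (max (int n - int k) 0) / real (k + 1)"
        proof -
          have "1 + real_of_int (max (int n - int k) 0) / real (k + 1)
             = (real (k+1) + real_of_int (max (int n - int k) 0)) / real (k + 1)"
            by (simp add: add_divide_distrib)
          then show ?thesis using divide_right_mono[OF ineq, of "real (k+1)"] by simp
        qed
      qed (use apos a1 Mnn in auto)
      finally show ?thesis .
    qed
    finally have "norm (x (int n + 1)) \<le> B (int n + 1)" .
    then show ?case using Suc.IH by (metis of_nat_Suc add.commute le_less not_less_eq_eq int_ops(4) zle_add1_eq_le)
  qed
  show ?thesis
  proof (intro allI impI)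
    fix n :: nat assume "n \<ge> 1"
    have "norm (x (int n)) \<le> B (int n)" using main[of n] by simp
    then show "norm (x (int n)) \<le> (\<Sum>i\<le>k. norm (a i) + \<sigma> * norm (b i)) powr (real n / real (k + 1))
        * Max ((\<lambda>j::nat. norm (x (- int j))) ` {..k})"
      by (simp add: B_def \<alpha>_def M_def)
  qed
qed

end
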